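(* Let $\alpha\in(\tfrac12,1)$, $0<\eta_0\le\frac1{2\lambda_\Sigma}$, $\eta_t=\eta_0t^{-\alpha}$, and assume $\Gamma$ is positive definite. If $$T\ge4\Big(\frac2{(1-\gamma)\lambda_0\eta_0}\Big)^{\frac1{1-\alpha}}(1-\alpha)^{\frac\alpha{1-\alpha}}\,\Gamma\Big(\frac1{1-\alpha}\Big)\,\mathrm{cond}(\Gamma),$$ then $\lambda_{\min}(A\bar\Lambda_TA^\top)\ge\frac12\lambda_{\min}(\Gamma)=\frac1{2\|\Gamma^{-1}\|}$.
   Context: $\mathcal S$ is a finite state space, $\gamma\in[0,1)$, $P(\cdot\mid s)$ a Markov transition kernel on $\mathcal S$ with stationary distribution $\mu$, $r:\mathcal S\to[0,1]$ the expected reward, and $\phi:\mathcal S\to\mathbb R^d$ a feature map with $\|\phi(s)\|_2\le1$. $A=\mathbb E_{s\sim\mu,s'\sim P(\cdot\mid s)}[\phi(s)(\phi(s)-\gamma\phi(s'))^\top]$, $b=\mathbb E_{s\sim\mu}[\phi(s)r(s)]$, $\Sigma=\mathbb E_{s\sim\mu}[\phi(s)\phi(s)^\top]$, $\lambda_0=\lambda_{\min}(\Sigma)>0$, $\lambda_\Sigma=\lambda_{\max}(\Sigma)$, $\theta^\star=A^{-1}b$. With $s_t\sim\mu$, $s_t'\sim P(\cdot\mid s_t)$, $r_t\in[0,1]$, $\mathbb E[r_t\mid s_t]=r(s_t)$, $A_t=\phi(s_t)(\phi(s_t)-\gamma\phi(s_t'))^\top$, $b_t=r_t\phi(s_t)$: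 $\Gamma=\mathbb E[(A_t\theta^\star-b_t)(A_t\theta^\star-b_t)^\top]$. For $0\le t\le T$, $Q_t=\eta_t\sum_{j=t}^T\prod_{k=t+1}^j(I-\eta_kA)$ (empty product $=I$), $\bar\Lambda_T=\frac1T\sum_{t=1}^TQ_t\Gamma Q_t^\top$. In the displayed condition, $\Gamma(\cdot)$ applied to a number denotes the Euler Gamma function, and $\mathrm{cond}(\Gamma)$ is the condition number of the matrix $\Gamma$. *)

theory Defs
  imports "HOL-Probability.Probability"
begin

definition real_eigenvalues :: "real^'n^'n \<Rightarrow> real set" where
  "real_eigenvalues M = {c. \<exists>v. v \<noteq> 0 \<and> M *v v = c *s v}"

definition lambda_min :: "real^'n^'n \<Rightarrow> real" where
  "lambda_min M = Min (real_eigenvalues M)"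

definition lambda_max :: "real^'n^'n \<Rightarrow> real" where
  "lambda_max M = Max (real_eigenvalues M)"

definition pos_def :: "real^'n^'n \<Rightarrow> bool" where
  "pos_def M \<longleftrightarrow> (\<forall>x. x \<noteq> 0 \<longrightarrow> x \<bullet> (M *v x) > 0)"

definition mat_norm :: "real^'n^'m \<Rightarrow> real" where
  "mat_norm M = onorm (\<lambda>x. M *v x)"

definition cond_num :: "real^'n^'n \<Rightarrow> real" where
  "cond_num M = mat_norm M * mat_norm (matrix_inv M)"

definition outer :: "real^'n \<Rightarrow> real^'m \<Rightarrow> real^'m^'n" where
  "outer u v = (\<chi> i j. u $ i * v $ j)"

definition step_prod :: "(nat \<Rightarrow> real) \<Rightarrow> real^'n^'n \<Rightarrow> nat \<Rightarrow> nat \<Rightarrow> real^'n^'n" where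
  "step_prod eta A t j = foldr (\<lambda>k M. (mat 1 - eta k *\<^sub>R A) ** M) [Suc t..<Suc j] (mat 1)"

definition Qmat :: "(nat \<Rightarrow> real) \<Rightarrow> real^'n^'n \<Rightarrow> nat \<Rightarrow> nat \<Rightarrow> real^'n^'n" where
  "Qmat eta A T t = eta t *\<^sub>R (\<Sum>j\<in>{t..T}. step_prod eta A t j)"

definition Lambda_bar :: "(nat \<Rightarrow> real) \<Rightarrow> real^'n^'n \<Rightarrow> real^'n^'n \<Rightarrow> nat \<Rightarrow> real^'n^'n" where
  "Lambda_bar eta A G T =
     (1 / real T) *\<^sub>R (\<Sum>t\<in>{1..T}. Qmat eta A T t ** G ** transpose (Qmat eta A T t))"

end

theory Submission
  imports Defs
begin

lemma mv_scaleR: "(M::real^'n^'m) *v (c *\<^sub>R x) = c *\<^sub>R (M *v x)"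
  by (simp add: matrix_vector_mult_def vec_eq_iff sum_distrib_left algebra_simps)

lemma mv_add: "(M::real^'n^'m) *v (x + y) = M *v x + M *v y"
  by (simp add: matrix_vector_right_distrib)

lemma sym_inner: "transpose (M::real^'n^'n) = M \<Longrightarrow> x \<bullet> (M *v y) = (M *v x) \<bullet> y"
  by (metis dot_lmul_matrix transpose_matrix_vector)

lemma continuous_quad: "continuous_on S (\<lambda>x::real^'n. x \<bullet> ((M::real^'n^'n) *v x))"
  by (intro continuous_intros continuous_on_id linear_continuous_on matrix_vector_mul_bounded_linear)

lemma sym_min_eig:
  fixes M :: "real^'n^'n"
  assumes sym: "transpose M = M"
  obtains v m where "norm v = 1" "M *v v = m *\<^sub>R v" "\<And>x. m * (norm x)^2 \<le> x \<bullet> (M *v x)"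
proof -
  let ?f = "\<lambda>x::real^'n. x \<bullet> (M *v x)"
  have ne: "sphere (0::real^'n) 1 \<noteq> {}" by simp
  obtain v where v: "v \<in> sphere 0 1" and vmin: "\<And>y. y \<in> sphere 0 1 \<Longrightarrow> ?f v \<le> ?f y"
    using continuous_attains_inf[OF compact_sphere ne continuous_quad] by blast
  define m where "m = ?f v"
  have nv: "norm v = 1" using v by simp
  have ray: "m * (norm x)^2 \<le> ?f x" for x
  proof (cases "x = 0")
    case True then show ?thesis by simp
  next
    case False
    define u where "u = (1 / norm x) *\<^sub>R x"
    have u: "u \<in> sphere 0 1" using False by (simp add: u_def)
    have x: "x = norm x *\<^sub>R u" using False by (simp add: u_def)
    have "?f x = (norm x)^2 * ?f u"
      by (subst (1 2) x) (simp add: mv_scaleR power2_eq_square)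
    moreover have "m \<le> ?f u" using vmin[OF u] by (simp add: m_def)
    ultimately show ?thesis by (metis mult.commute mult_left_mono zero_le_power2)
  qed
  define w where "w = M *v v - m *\<^sub>R v"
  define K where "K = ?f w - m * (norm w)^2"
  have key: "2 * t * (norm w)^2 + t^2 * K \<ge> 0" for t
  proof -
    have "m * (norm (v + t *\<^sub>R w))^2 \<le> ?f (v + t *\<^sub>R w)" by (rule ray)
    moreover have "?f (v + t *\<^sub>R w) = m + 2 * t * (w \<bullet> (M *v v)) + t^2 * ?f w"
    proof -
      have "v \<bullet> (M *v w) = w \<bullet> (M *v v)"
        using sym_inner[OF sym, of v w] by (simp add: inner_commute)
      then show ?thesis
        by (simp add: mv_add mv_scaleR inner_add_left inner_add_right m_def power2_eq_square algebra_simps)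
    qed
    moreover have "(norm (v + t *\<^sub>R w))^2 = 1 + 2 * t * (v \<bullet> w) + t^2 * (norm w)^2"
    proof -
      have "(norm (v + t *\<^sub>R w))^2 = v \<bullet> v + 2*t*(v \<bullet> w) + t^2*(w \<bullet> w)"
        unfolding power2_norm_eq_inner by (simp add: inner_add_left inner_add_right inner_commute power2_eq_square algebra_simps)
      moreover have "v \<bullet> v = 1" using nv by (simp add: norm_eq_1)
      moreover have "w \<bullet> w = (norm w)^2" by (simp add: power2_norm_eq_inner)
      ultimately show ?thesis by simp
    qed
    moreover have "w \<bullet> (M *v v) - m * (v \<bullet> w) = (norm w)^2"
      by (simp add: w_def power2_norm_eq_inner inner_diff_left inner_diff_right inner_commute algebra_simps)
    ultimately have "m * (1 + 2 * t * (v \<bullet> w) + t^2 * (norm w)^2) \<le> m + 2 * t * (w \<bullet> (M *v v)) + t^2 * ?f w"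
      and "w \<bullet> (M *v v) = (norm w)^2 + m * (v \<bullet> w)" by auto
    then show ?thesis unfolding K_def by (simp add: algebra_simps)
  qed
  have "w = 0"
  proof (rule ccontr)
    assume "w \<noteq> 0"
    then have n: "(norm w)^2 > 0" by simp
    define s where "s = (norm w)^2 / (\<bar>K\<bar> + 1)"
    have s: "s > 0" using n by (simp add: s_def)
    have "2 * (-s) * (norm w)^2 + (-s)^2 * K \<ge> 0" by (rule key)
    then have "s * K \<ge> 2 * (norm w)^2" using s by (simp add: power2_eq_square)
    moreover have "s * K \<le> (norm w)^2 * (\<bar>K\<bar> / (\<bar>K\<bar> + 1))" unfolding s_def
      by (smt (verit, best) abs_ge_self divide_nonneg_nonneg mult_left_mono n times_divide_eq_left times_divide_eq_right zero_le_power2 mult.commute)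
    moreover have "\<bar>K\<bar> / (\<bar>K\<bar> + 1) \<le> 1" by simp
    ultimately show False using n by (smt (verit) mult_left_le)
  qed
  then have "M *v v = m *\<^sub>R v" by (simp add: w_def)
  with nv ray that show ?thesis by blast
qed

lemma eig_mem: "M *v v = c *\<^sub>R v \<Longrightarrow> v \<noteq> 0 \<Longrightarrow> c \<in> real_eigenvalues M"
  unfolding real_eigenvalues_def by (auto simp: scalar_mult_eq_scaleR)

lemma sym_eig_finite:
  assumes sym: "transpose (M::real^'n^'n) = M"
  shows "finite (real_eigenvalues M)"
proof -
  define S where "S = real_eigenvalues M"
  define ev where "ev c = (SOME v. v \<noteq> 0 \<and> M *v v = c *\<^sub>R v)" for c
  have ev: "ev c \<noteq> 0 \<and> M *v ev c = c *\<^sub>R ev c" if "c \<in> S" for c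
  proof -
    have "\<exists>v. v \<noteq> 0 \<and> M *v v = c *\<^sub>R v" using that by (auto simp: S_def real_eigenvalues_def scalar_mult_eq_scaleR)
    then show ?thesis unfolding ev_def by (rule someI_ex)
  qed
  have inj: "inj_on ev S"
  proof (rule inj_onI)
    fix c d assume c: "c \<in> S" and d: "d \<in> S" and e: "ev c = ev d"
    then have "c *\<^sub>R ev c = d *\<^sub>R ev c" using ev[OF c] ev[OF d] by metis
    then show "c = d" using ev[OF c] by (simp add: scaleR_cancel_right)
  qed
  have orth: "pairwise orthogonal (ev ` S)"
  proof (clarsimp simp: pairwise_def)
    fix c d assume c: "c \<in> S" and d: "d \<in> S" and ne: "ev c \<noteq> ev d"
    then have cd: "c \<noteq> d" by auto
    have "c * (ev c \<bullet> ev d) = (M *v ev c) \<bullet> ev d" using ev[OF c] by simp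
    also have "\<dots> = ev c \<bullet> (M *v ev d)" using sym_inner[OF sym] by simp
    also have "\<dots> = d * (ev c \<bullet> ev d)" using ev[OF d] by simp
    finally show "orthogonal (ev c) (ev d)" using cd by (simp add: orthogonal_def)
  qed
  have "0 \<notin> ev ` S" using ev by auto
  then have "independent (ev ` S)" using pairwise_orthogonal_independent[OF orth] by blast
  then have "finite (ev ` S)" by (rule finiteI_independent)
  then show ?thesis using inj finite_imageD S_def by blast
qed

lemma sym_lmin:
  assumes sym: "transpose (M::real^'n^'n) = M"
  shows "\<exists>v. norm v = 1 \<and> M *v v = lambda_min M *\<^sub>R v"
    and "lambda_min M * (norm x)^2 \<le> x \<bullet> (M *v x)"
proof -
  obtain v m where v: "norm v = 1" "M *v v = m *\<^sub>R v" and r: "\<And>x. m * (norm x)^2 \<le> x \<bullet> (M *v x)"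
    using sym_min_eig[OF sym] by metis
  have "v \<noteq> 0" using v(1) by auto
  then have mem: "m \<in> real_eigenvalues M" using eig_mem[OF v(2)] by auto
  have lb: "m \<le> c" if cS: "c \<in> real_eigenvalues M" for c
  proof -
    obtain u where u: "u \<noteq> 0" "M *v u = c *\<^sub>R u" using cS unfolding real_eigenvalues_def by (auto simp: scalar_mult_eq_scaleR)
    have "m * (norm u)^2 \<le> c * (norm u)^2" using r[of u] u(2) by (simp add: power2_norm_eq_inner)
    then show ?thesis using u(1) by simp
  qed
  have "lambda_min M = m" unfolding lambda_min_def
    by (rule Min_eqI[OF sym_eig_finite[OF sym] lb mem])
  then show "\<exists>v. norm v = 1 \<and> M *v v = lambda_min M *\<^sub>R v" "lambda_min M * (norm x)^2 \<le> x \<bullet> (M *v x)"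
    using v r by auto
qed

lemma sym_lmin_ge:
  assumes sym: "transpose (M::real^'n^'n) = M" and h: "\<And>x. c * (norm x)^2 \<le> x \<bullet> (M *v x)"
  shows "c \<le> lambda_min M"
proof -
  obtain v where v: "norm v = 1" "M *v v = lambda_min M *\<^sub>R v" using sym_lmin(1)[OF sym] by blast
  have "c \<le> v \<bullet> (M *v v)" using h[of v] v(1) by simp
  also have "\<dots> = lambda_min M" using v by (simp add: norm_eq_1)
  finally show ?thesis .
qed

lemma mv_neg: "(- M) *v x = - ((M::real^'n^'m) *v x)"
  by (simp add: matrix_vector_mult_def vec_eq_iff sum_negf)

lemma transpose_neg: "transpose (- (M::real^'n^'m)) = - transpose M"
  by (simp add: transpose_def vec_eq_iff)

lemma sym_lmax:
  assumes sym: "transpose (M::real^'n^'n) = M"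
  shows "x \<bullet> (M *v x) \<le> lambda_max M * (norm x)^2"
proof -
  have sym': "transpose (- M) = - M" using sym by (simp add: transpose_neg)
  obtain v m where v: "norm v = 1" "(- M) *v v = m *\<^sub>R v" and r: "\<And>x. m * (norm x)^2 \<le> x \<bullet> ((- M) *v x)"
    using sym_min_eig[OF sym'] by metis
  have "M *v v = (- m) *\<^sub>R v" using v(2) by (metis mv_neg minus_minus scaleR_minus_left)
  then have mem: "- m \<in> real_eigenvalues M" using eig_mem v(1) by fastforce
  have "- m \<le> lambda_max M" unfolding lambda_max_def using sym_eig_finite[OF sym] mem by simp
  moreover have "x \<bullet> (M *v x) \<le> (- m) * (norm x)^2" using r[of x] by (simp add: mv_neg)
  ultimately show ?thesis by (smt (verit) mult_right_mono zero_le_power2)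
qed

lemma matrix_inv_prop: "invertible (A::real^'n^'n) \<Longrightarrow> A ** matrix_inv A = mat 1 \<and> matrix_inv A ** A = mat 1"
  unfolding matrix_inv_def invertible_def by (rule someI_ex)

lemma pd_facts:
  fixes G :: "real^'n^'n"
  assumes sym: "transpose G = G" and pd: "pos_def G"
  shows "lambda_min G > 0" "lambda_min G = 1 / mat_norm (matrix_inv G)" "cond_num G \<ge> 1"
proof -
  obtain v where v: "norm v = 1" "G *v v = lambda_min G *\<^sub>R v" using sym_lmin(1)[OF sym] by blast
  have "v \<noteq> 0" using v by auto
  then have "v \<bullet> (G *v v) > 0" using pd by (simp add: pos_def_def)
  then show mpos: "lambda_min G > 0" using v by (simp add: norm_eq_1)
  define m where "m = lambda_min G"
  have ray: "m * (norm x)^2 \<le> x \<bullet> (G *v x)" for x using sym_lmin(2)[OF sym] by (simp add: m_def)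
  have lowG: "m * norm x \<le> norm (G *v x)" for x
  proof (cases "x = 0")
    case True then show ?thesis by simp
  next
    case False
    have "m * (norm x)^2 \<le> norm x * norm (G *v x)"
      using ray[of x] Cauchy_Schwarz_ineq2[of x "G *v x"] by (smt (verit) abs_ge_self)
    then show ?thesis using False by (simp add: power2_eq_square mult.assoc[symmetric])
  qed
  have "inj ((*v) G)"
  proof (rule injI)
    fix x y assume "G *v x = G *v y"
    then have "G *v (x - y) = 0" by (simp add: matrix_vector_mult_diff_distrib)
    then have "m * norm (x - y) \<le> 0" using lowG[of "x - y"] by simp
    then show "x = y" using mpos by (simp add: m_def mult_le_0_iff)
  qed
  then have inv: "invertible G" using matrix_left_invertible_injective invertible_left_inverse by blast
  define H where "H = matrix_inv G"
  have GH: "G ** H = mat 1" "H ** G = mat 1" using matrix_inv_prop[OF inv] by (auto simp: H_def)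
  have HGx: "H *v (G *v x) = x" for x using GH by (simp add: matrix_vector_mul_assoc)
  have GHx: "G *v (H *v x) = x" for x using GH by (simp add: matrix_vector_mul_assoc)
  have le: "mat_norm H \<le> 1 / m" unfolding mat_norm_def
  proof (rule onorm_le)
    fix y
    have "m * norm (H *v y) \<le> norm y" using lowG[of "H *v y"] GHx by simp
    then show "norm (H *v y) \<le> 1 / m * norm y" using mpos by (simp add: m_def field_simps mult.commute)
  qed
  have Hv: "H *v v = (1 / m) *\<^sub>R v"
  proof -
    have "v = H *v (m *\<^sub>R v)" using HGx[of v] v by (simp add: m_def)
    then have "v = m *\<^sub>R (H *v v)" by (simp add: mv_scaleR)
    then have "(1 / m) *\<^sub>R v = (1/m * m) *\<^sub>R (H *v v)" by (metis scaleR_scaleR)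
    then show ?thesis using mpos by (simp add: m_def)
  qed
  have "norm (H *v v) \<le> mat_norm H * norm v" unfolding mat_norm_def by (rule onorm) simp
  then have ge: "1 / m \<le> mat_norm H" using Hv v mpos by (simp add: m_def)
  have eq: "mat_norm H = 1 / m" using le ge by simp
  then show "lambda_min G = 1 / mat_norm (matrix_inv G)" using mpos by (simp add: H_def m_def)
  have "norm (G *v v) \<le> mat_norm G * norm v" unfolding mat_norm_def by (rule onorm) simp
  then have "m \<le> mat_norm G" using v mpos by (simp add: m_def)
  then have "m * mat_norm H \<le> mat_norm G * mat_norm H" using eq mpos by (intro mult_right_mono) (auto simp: m_def)
  moreover have "m * mat_norm H = 1" using eq mpos by (simp add: m_def)
  ultimately show "cond_num G \<ge> 1" unfolding cond_num_def H_def by simp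
qed


lemma pow_step:
  fixes q k :: real
  assumes q: "0 < q" "q < 1" and k: "k > 0"
  shows "(k+1) powr q - k powr q \<le> q * k powr (q - 1)"
proof -
  have der: "((\<lambda>x. x powr q) has_real_derivative q * x powr (q - 1)) (at x)" if "x > 0" for x
    using has_real_derivative_powr[OF that] .
  have cont: "continuous_on {k..k+1} (\<lambda>x. x powr q)"
  proof (rule continuous_at_imp_continuous_on, intro ballI)
    fix x assume "x \<in> {k..k+1}"
    then have "x > 0" using k by auto
    then show "isCont (\<lambda>x. x powr q) x" by (rule DERIV_isCont[OF der])
  qed
  obtain l z where z: "k < z" "z < k+1" "((\<lambda>x. x powr q) has_real_derivative l) (at z)"
      and eq: "(k+1) powr q - k powr q = (k + 1 - k) * l"
    using MVT[of k "k+1" "\<lambda>x. x powr q"] cont der k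
    by (smt (verit) real_differentiable_def)
  have "l = q * z powr (q - 1)" using DERIV_unique[OF z(3) der] z k by simp
  moreover have "z powr (q - 1) \<le> k powr (q - 1)" using z k q by (intro powr_mono2') auto
  ultimately show ?thesis using eq q by simp
qed

lemma pow_sum:
  fixes \<alpha> :: real
  assumes a: "0 < \<alpha>" "\<alpha> < 1"
  shows "((real j + 1) powr (1 - \<alpha>) - 1) / (1 - \<alpha>) \<le> (\<Sum>k\<in>{1..j}. real k powr (- \<alpha>))"
proof (induction j)
  case 0 then show ?case by simp
next
  case (Suc j)
  have "(real j + 2) powr (1 - \<alpha>) - (real j + 1) powr (1 - \<alpha>) \<le> (1 - \<alpha>) * (real j + 1) powr (- \<alpha>)"
    using pow_step[of "1 - \<alpha>" "real j + 1"] a by (simp add: add.assoc)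
  then have "((real j + 2) powr (1 - \<alpha>) - (real j + 1) powr (1 - \<alpha>)) / (1 - \<alpha>) \<le> (real j + 1) powr (- \<alpha>)"
    using a by (simp add: pos_divide_le_eq mult.commute)
  moreover have "((real j + 2) powr (1 - \<alpha>) - 1) / (1 - \<alpha>) = ((real j + 1) powr (1 - \<alpha>) - 1) / (1 - \<alpha>) + ((real j + 2) powr (1 - \<alpha>) - (real j + 1) powr (1 - \<alpha>)) / (1 - \<alpha>)"
    by (simp add: diff_divide_distrib)
  ultimately have "((real j + 2) powr (1 - \<alpha>) - 1) / (1 - \<alpha>) \<le> ((real j + 1) powr (1 - \<alpha>) - 1) / (1 - \<alpha>) + (real j + 1) powr (- \<alpha>)"
    by linarith
  then show ?case using Suc by (simp add: add.commute add.left_commute)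
qed

definition gint :: "real \<Rightarrow> real \<Rightarrow> real" where "gint p t = t powr (p - 1) / exp t"

lemma gint_cont: "0 < u1 \<Longrightarrow> continuous_on {u1..u2} (gint p)"
  unfolding gint_def by (intro continuous_intros) auto

lemma gint_integrable: "0 < u1 \<Longrightarrow> gint p integrable_on {u1..u2}"
  by (rule integrable_continuous_real[OF gint_cont])

lemma gamma_piece:
  fixes p u1 u2 :: real
  assumes p: "p > 0" and u: "0 < u1" "u1 \<le> u2"
  shows "exp (- u2) * ((u2 powr p - u1 powr p) / p) \<le> integral {u1..u2} (gint p)"
proof -
  have ftc: "((\<lambda>t. t powr (p - 1)) has_integral (u2 powr p / p - u1 powr p / p)) {u1..u2}"
  proof (rule fundamental_theorem_of_calculus[OF u(2)])
    fix x assume "x \<in> {u1..u2}"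
    then have x: "x > 0" using u by auto
    have "((\<lambda>t. t powr p / p) has_real_derivative (p * x powr (p - 1)) / p) (at x)"
      by (intro DERIV_cdivide has_real_derivative_powr x)
    then have "((\<lambda>t. t powr p / p) has_real_derivative x powr (p - 1)) (at x)" using p by simp
    then show "((\<lambda>t. t powr p / p) has_vector_derivative x powr (p - 1)) (at x within {u1..u2})"
      by (simp add: has_real_derivative_iff_has_vector_derivative has_vector_derivative_at_within)
  qed
  then have "((\<lambda>t. exp (- u2) * t powr (p - 1)) has_integral exp (- u2) * ((u2 powr p - u1 powr p) / p)) {u1..u2}"
    using has_integral_mult_right[OF ftc, of "exp (- u2)"] by (simp add: diff_divide_distrib)
  moreover have "(gint p has_integral integral {u1..u2} (gint p)) {u1..u2}"
    using gint_integrable[OF u(1)] by (rule integrable_integral)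
  moreover have "exp (- u2) * t powr (p - 1) \<le> gint p t" if "t \<in> {u1..u2}" for t
  proof -
    have "exp (- u2) \<le> exp (- t)" using that by simp
    then have "exp (- u2) * t powr (p - 1) \<le> exp (- t) * t powr (p - 1)" by (intro mult_right_mono) auto
    then show ?thesis by (simp add: gint_def exp_minus field_simps)
  qed
  ultimately show ?thesis by (rule has_integral_le)
qed

lemma gint_le_Gamma:
  assumes p: "p > 0" and u: "0 < u1"
  shows "integral {u1..u2} (gint p) \<le> Gamma p"
proof -
  have g: "(gint p has_integral Gamma p) {0..}" unfolding gint_def using Gamma_integral_real[OF p] .
  have "integral {u1..u2} (gint p) \<le> integral {0..} (gint p)"
  proof (rule integral_subset_le)
    show "{u1..u2} \<subseteq> {0..}" using u by auto
    show "gint p integrable_on {u1..u2}" using gint_integrable[OF u] .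
    show "gint p integrable_on {0..}" using g by (rule has_integral_integrable)
    show "\<forall>x\<in>{0..}. 0 \<le> gint p x" by (auto simp: gint_def)
  qed
  then show ?thesis using g by (simp add: integral_unique)
qed

lemma exp_38: "exp (3/8::real) \<le> 3/2"
proof -
  have "1 + (- 3/32::real) \<le> exp (- 3/32)" by (rule exp_ge_add_one_self)
  then have "exp (3/32::real) \<le> 32/29" by (simp add: exp_minus field_simps)
  then have "exp (3/32::real) ^ 4 \<le> (32/29) ^ 4" by (intro power_mono) auto
  moreover have "exp (3/8::real) = exp (3/32) ^ 4" using exp_of_nat_mult[of 4 "3/32::real"] by simp
  moreover have "(32/29::real) ^ 4 \<le> 3/2" by (simp add: power_divide)
  ultimately show ?thesis by linarith
qed

lemma sum_gint:
  fixes a p :: real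
  assumes a: "a > 0" and p: "p > 0"
  defines "u \<equiv> \<lambda>j::nat. a * real j powr (1 / p)"
  shows "(\<Sum>j\<in>{1..n}. exp (- u (Suc j))) \<le> (p / a powr p) * integral {u 1..u (Suc n)} (gint p)"
proof (induction n)
  case 0 then show ?case by simp
next
  case (Suc n)
  have upow: "u j powr p = a powr p * real j" for j
    unfolding u_def using a p by (simp add: powr_mult powr_powr)
  have umono: "u i \<le> u j" if "i \<le> j" for i j
    unfolding u_def using a p that by (intro mult_left_mono powr_mono2) auto
  have u1: "u 1 > 0" unfolding u_def using a by simp
  have piece: "exp (- u (Suc (Suc n))) \<le> (p / a powr p) * integral {u (Suc n)..u (Suc (Suc n))} (gint p)"
  proof -
    have "exp (- u (Suc (Suc n))) * ((u (Suc (Suc n)) powr p - u (Suc n) powr p) / p) \<le> integral {u (Suc n)..u (Suc (Suc n))} (gint p)"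
      using u1 umono[of 1 "Suc n"] by (intro gamma_piece p umono) auto
    moreover have "(u (Suc (Suc n)) powr p - u (Suc n) powr p) / p = a powr p / p"
      by (simp add: upow algebra_simps)
    ultimately show ?thesis using a p by (simp add: field_simps)
  qed
  have comb: "integral {u 1..u (Suc n)} (gint p) + integral {u (Suc n)..u (Suc (Suc n))} (gint p) = integral {u 1..u (Suc (Suc n))} (gint p)"
    using umono u1 by (intro Henstock_Kurzweil_Integration.integral_combine gint_integrable) auto
  have "(\<Sum>j\<in>{1..Suc n}. exp (- u (Suc j))) = (\<Sum>j\<in>{1..n}. exp (- u (Suc j))) + exp (- u (Suc (Suc n)))"
    by simp
  also have "\<dots> \<le> (p / a powr p) * integral {u 1..u (Suc n)} (gint p) + (p / a powr p) * integral {u (Suc n)..u (Suc (Suc n))} (gint p)"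
    using Suc piece by linarith
  also have "\<dots> = (p / a powr p) * integral {u 1..u (Suc (Suc n))} (gint p)"
    using comb by (metis distrib_left)
  finally show ?case .
qed

lemma num_main:
  fixes \<alpha> b :: real and T :: nat
  assumes al: "0 < \<alpha>" "\<alpha> < 1" and b: "0 < b" "b \<le> 3/8"
    and T: "4 * (3/2/b) powr (1/(1-\<alpha>)) * (1-\<alpha>) powr (\<alpha>/(1-\<alpha>)) * Gamma (1/(1-\<alpha>)) \<le> real T"
  shows "(\<Sum>j\<in>{1..T}. exp (- (b * (\<Sum>k\<in>{1..j}. real k powr (-\<alpha>))))) \<le> real T / 4"
proof -
  define p where "p = 1 / (1 - \<alpha>)"
  define a where "a = b * p"
  have p: "p > 0" using al by (simp add: p_def)
  have a: "a > 0" using b p by (simp add: a_def)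
  have qp: "1 / p = 1 - \<alpha>" using al by (simp add: p_def)
  define u where "u = (\<lambda>j::nat. a * real j powr (1 / p))"
  have trm: "exp (- (b * (\<Sum>k\<in>{1..j}. real k powr (-\<alpha>)))) \<le> exp a * exp (- u (Suc j))" for j
  proof -
    have "((real j + 1) powr (1 - \<alpha>) - 1) / (1 - \<alpha>) \<le> (\<Sum>k\<in>{1..j}. real k powr (-\<alpha>))"
      by (rule pow_sum[OF al])
    then have "b * (((real j + 1) powr (1 - \<alpha>) - 1) / (1 - \<alpha>)) \<le> b * (\<Sum>k\<in>{1..j}. real k powr (-\<alpha>))"
      using b by (intro mult_left_mono) auto
    moreover have "b * (((real j + 1) powr (1 - \<alpha>) - 1) / (1 - \<alpha>)) = u (Suc j) - a"
    proof -
      have us: "u (Suc j) = b / (1-\<alpha>) * (real j + 1) powr (1-\<alpha>)"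
        using qp by (simp add: u_def a_def p_def add.commute)
      have aa: "a = b / (1-\<alpha>)" by (simp add: a_def p_def)
      have "b * ((X - 1) / (1 - \<alpha>)) = b / (1-\<alpha>) * X - b / (1-\<alpha>)" for X
        by (simp add: diff_divide_distrib right_diff_distrib)
      then show ?thesis using us aa by simp
    qed
    ultimately have "- (b * (\<Sum>k\<in>{1..j}. real k powr (-\<alpha>))) \<le> a + (- u (Suc j))" by linarith
    then show ?thesis by (metis exp_add exp_le_cancel_iff)
  qed
  have "(\<Sum>j\<in>{1..T}. exp (- (b * (\<Sum>k\<in>{1..j}. real k powr (-\<alpha>))))) \<le> (\<Sum>j\<in>{1..T}. exp a * exp (- u (Suc j)))"
    by (intro sum_mono trm)
  also have "\<dots> = exp a * (\<Sum>j\<in>{1..T}. exp (- u (Suc j)))" by (simp add: sum_distrib_left)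
  also have "\<dots> \<le> exp a * ((p / a powr p) * integral {u 1..u (Suc T)} (gint p))"
    using sum_gint[OF a p, of T] unfolding u_def by (intro mult_left_mono) auto
  also have "\<dots> \<le> exp a * ((p / a powr p) * Gamma p)"
    using gint_le_Gamma[OF p, of "u 1" "u (Suc T)"] a p by (intro mult_left_mono) (auto simp: u_def)
  also have "\<dots> \<le> (3/2/b) powr p * (1-\<alpha>) powr (\<alpha>/(1-\<alpha>)) * Gamma p"
  proof -
    have e: "exp a \<le> (3/2) powr p"
    proof -
      have "exp b \<le> 3/2" using b exp_38 by (smt (verit) exp_le_cancel_iff)
      then have "exp b powr p \<le> (3/2) powr p" using p by (intro powr_mono2) auto
      moreover have "exp b powr p = exp a" by (simp add: exp_powr_real a_def mult.commute)
      ultimately show ?thesis by simp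
    qed
    have ap: "a powr p = b powr p * (p * p powr (p - 1))"
      unfolding a_def using b p by (simp add: powr_mult powr_diff)
    have al2: "(1-\<alpha>) powr (\<alpha>/(1-\<alpha>)) = 1 / p powr (p - 1)"
    proof -
      have "\<alpha>/(1-\<alpha>) = p - 1" using al by (simp add: p_def field_simps)
      moreover have "1 - \<alpha> = 1 / p" using qp by simp
      ultimately show ?thesis using p by (simp add: powr_divide)
    qed
    have "exp a * ((p / a powr p) * Gamma p) = exp a / (b powr p * p powr (p - 1)) * Gamma p"
      using p by (simp add: ap field_simps)
    also have "\<dots> \<le> (3/2) powr p / (b powr p * p powr (p - 1)) * Gamma p"
      using e p b by (intro mult_right_mono divide_right_mono) (auto intro: less_imp_le)
    also have "\<dots> = (3/2/b) powr p * (1-\<alpha>) powr (\<alpha>/(1-\<alpha>)) * Gamma p"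
      using b by (simp add: al2 powr_divide powr_mult)
    finally show ?thesis .
  qed
  also have "\<dots> \<le> real T / 4" using T by (simp add: p_def)
  finally show ?thesis .
qed


lemma outer_mv: "outer u v *v y = (v \<bullet> y) *\<^sub>R (u::real^'n)"
  by (simp add: outer_def matrix_vector_mult_def vec_eq_iff inner_vec_def sum_distrib_left algebra_simps)

lemma smat_mv: "(c *\<^sub>R (M::real^'n^'m)) *v y = c *\<^sub>R (M *v y)"
  by (simp add: scaleR_matrix_vector_assoc)

lemma sum_mv: "(\<Sum>s\<in>S. (M s::real^'n^'m)) *v y = (\<Sum>s\<in>S. M s *v y)"
proof (induction S rule: infinite_finite_induct)
  case (infinite A) then show ?case by (simp add: matrix_vector_mult_def vec_eq_iff)
next
  case empty then show ?case by (simp add: matrix_vector_mult_def vec_eq_iff)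
next
  case (insert x F) then show ?case by (simp add: matrix_vector_mult_add_rdistrib)
qed

lemma transpose_sum: "transpose (\<Sum>s\<in>S. (M s::real^'n^'m)) = (\<Sum>s\<in>S. transpose (M s))"
  by (induction S rule: infinite_finite_induct) (auto simp: transpose_def vec_eq_iff)

lemma transpose_outer: "transpose (outer u v) = outer v (u::real^'n)"
  by (simp add: transpose_def outer_def vec_eq_iff mult.commute)

lemma transpose_add: "transpose (M + N) = transpose M + transpose (N::real^'n^'m)"
  by (simp add: transpose_def vec_eq_iff)

lemma transpose_scaleR': "transpose (c *\<^sub>R (M::real^'n^'m)) = c *\<^sub>R transpose M"
  by (rule transpose_scalar)

lemma weighted:
  fixes w :: "'s::finite \<Rightarrow> 's \<Rightarrow> real" and \<mu> f :: "'s \<Rightarrow> real"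
  assumes wnn: "\<And>s s'. 0 \<le> w s s'" and row: "\<And>s. (\<Sum>s'\<in>UNIV. w s s') = \<mu> s"
    and col: "\<And>s'. (\<Sum>s\<in>UNIV. w s s') = \<mu> s'"
  shows "(\<Sum>s\<in>UNIV. \<Sum>s'\<in>UNIV. w s s' * (f s)^2) = (\<Sum>s\<in>UNIV. \<mu> s * (f s)^2)"
    and "(\<Sum>s\<in>UNIV. \<Sum>s'\<in>UNIV. w s s' * (f s')^2) = (\<Sum>s\<in>UNIV. \<mu> s * (f s)^2)"
    and "(\<Sum>s\<in>UNIV. \<Sum>s'\<in>UNIV. w s s' * (f s * f s')) \<le> (\<Sum>s\<in>UNIV. \<mu> s * (f s)^2)"
proof -
  show A: "(\<Sum>s\<in>UNIV. \<Sum>s'\<in>UNIV. w s s' * (f s)^2) = (\<Sum>s\<in>UNIV. \<mu> s * (f s)^2)"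
    by (simp add: sum_distrib_right[symmetric] row)
  show B: "(\<Sum>s\<in>UNIV. \<Sum>s'\<in>UNIV. w s s' * (f s')^2) = (\<Sum>s\<in>UNIV. \<mu> s * (f s)^2)"
    by (subst sum.swap) (simp add: sum_distrib_right[symmetric] col)
  have "(\<Sum>s\<in>UNIV. \<Sum>s'\<in>UNIV. w s s' * (f s * f s')) \<le> (\<Sum>s\<in>UNIV. \<Sum>s'\<in>UNIV. w s s' * (((f s)^2 + (f s')^2) / 2))"
  proof (intro sum_mono mult_left_mono wnn)
    fix s s' show "f s * f s' \<le> ((f s)^2 + (f s')^2) / 2"
      using sum_squares_bound[of "f s" "f s'"] by simp
  qed
  also have "\<dots> = ((\<Sum>s\<in>UNIV. \<Sum>s'\<in>UNIV. w s s' * (f s)^2) + (\<Sum>s\<in>UNIV. \<Sum>s'\<in>UNIV. w s s' * (f s')^2)) / 2"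
    by (simp add: sum_divide_distrib[symmetric] sum.distrib[symmetric] algebra_simps)
  finally show "(\<Sum>s\<in>UNIV. \<Sum>s'\<in>UNIV. w s s' * (f s * f s')) \<le> (\<Sum>s\<in>UNIV. \<mu> s * (f s)^2)"
    using A B by simp
qed

lemma contraction:
  fixes \<gamma> \<eta> Lmn LS :: real and P :: "'s::finite \<Rightarrow> 's \<Rightarrow> real" and \<mu> :: "'s \<Rightarrow> real"
    and \<phi> :: "'s \<Rightarrow> real^'d::finite" and y :: "real^'d"
  defines "Sig \<equiv> (\<Sum>s\<in>UNIV. \<mu> s *\<^sub>R outer (\<phi> s) (\<phi> s))"
    and "A \<equiv> (\<Sum>s\<in>UNIV. \<Sum>s'\<in>UNIV. (\<mu> s * P s s') *\<^sub>R outer (\<phi> s) (\<phi> s - \<gamma> *\<^sub>R \<phi> s'))"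
  assumes gamma: "0 \<le> \<gamma>" "\<gamma> < 1"
    and P_nonneg: "\<And>s s'. 0 \<le> P s s'"
    and P_sum: "\<And>s. (\<Sum>s'\<in>UNIV. P s s') = 1"
    and mu_nonneg: "\<And>s. 0 \<le> \<mu> s"
    and mu_stat: "\<And>s'. (\<Sum>s\<in>UNIV. \<mu> s * P s s') = \<mu> s'"
    and LS: "LS > 0" and up: "\<And>y. y \<bullet> (Sig *v y) \<le> LS * (norm y)^2"
    and lo: "\<And>y. Lmn * (norm y)^2 \<le> y \<bullet> (Sig *v y)"
    and eta: "0 \<le> \<eta>" "\<eta> * LS \<le> 1/2"
  shows "(norm (y - \<eta> *\<^sub>R (A *v y)))^2 \<le> (1 - 3/2 * \<eta> * (1-\<gamma>) * Lmn) * (norm y)^2"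
proof -
  define w where "w s s' = \<mu> s * P s s'" for s s'
  have wnn: "0 \<le> w s s'" for s s' using P_nonneg mu_nonneg by (simp add: w_def)
  have row: "(\<Sum>s'\<in>UNIV. w s s') = \<mu> s" for s by (simp add: w_def sum_distrib_left[symmetric] P_sum)
  have col: "(\<Sum>s\<in>UNIV. w s s') = \<mu> s'" for s' by (simp add: w_def mu_stat)
  note W = weighted[OF wnn row col]
  have Sq: "z \<bullet> (Sig *v z) = (\<Sum>s\<in>UNIV. \<mu> s * (\<phi> s \<bullet> z)^2)" for z
    by (simp add: Sig_def sum_mv smat_mv outer_mv inner_sum_right power2_eq_square inner_commute mult.assoc)
  have Aq: "z \<bullet> (A *v y) = (\<Sum>s\<in>UNIV. \<Sum>s'\<in>UNIV. w s s' * ((\<phi> s \<bullet> z) * ((\<phi> s \<bullet> y) - \<gamma> * (\<phi> s' \<bullet> y))))" for z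
    by (simp add: A_def w_def sum_mv smat_mv outer_mv inner_sum_right inner_diff_right inner_commute mult.assoc mult.commute mult.left_commute)
  define a where "a s = \<phi> s \<bullet> y" for s
  define sy where "sy = (\<Sum>s\<in>UNIV. \<mu> s * (a s)^2)"
  define c where "c = (\<Sum>s\<in>UNIV. \<Sum>s'\<in>UNIV. w s s' * (a s * a s'))"
  define E where "E = (\<Sum>s\<in>UNIV. \<Sum>s'\<in>UNIV. w s s' * (a s - \<gamma> * a s')^2)"
  have sy: "y \<bullet> (Sig *v y) = sy" using Sq[of y] by (simp add: sy_def a_def)
  have yAy: "y \<bullet> (A *v y) = sy - \<gamma> * c"
  proof -
    have "y \<bullet> (A *v y) = (\<Sum>s\<in>UNIV. \<Sum>s'\<in>UNIV. w s s' * (a s)^2 - \<gamma> * (w s s' * (a s * a s')))"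
      using Aq[of y] by (simp add: a_def power2_eq_square algebra_simps)
    also have "\<dots> = sy - \<gamma> * c"
      using W(1)[of a] by (simp add: sum_subtractf sum_distrib_left sy_def c_def)
    finally show ?thesis .
  qed
  have E: "E = sy - 2 * \<gamma> * c + \<gamma>^2 * sy"
  proof -
    have "E = (\<Sum>s\<in>UNIV. \<Sum>s'\<in>UNIV. w s s' * (a s)^2 - 2 * \<gamma> * (w s s' * (a s * a s')) + \<gamma>^2 * (w s s' * (a s')^2))"
      unfolding E_def by (intro sum.cong refl) (simp add: power2_eq_square algebra_simps)
    also have "\<dots> = (\<Sum>s\<in>UNIV. \<Sum>s'\<in>UNIV. w s s' * (a s)^2) - 2 * \<gamma> * (\<Sum>s\<in>UNIV. \<Sum>s'\<in>UNIV. w s s' * (a s * a s')) + \<gamma>^2 * (\<Sum>s\<in>UNIV. \<Sum>s'\<in>UNIV. w s s' * (a s')^2)"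
      by (simp add: sum.distrib sum_subtractf sum_distrib_left)
    also have "\<dots> = sy - 2 * \<gamma> * c + \<gamma>^2 * sy"
      using W(1)[of a] W(2)[of a] by (simp add: sy_def c_def)
    finally show ?thesis .
  qed
  have Enn: "E \<ge> 0" unfolding E_def using wnn by (intro sum_nonneg mult_nonneg_nonneg) auto
  have csy: "c \<le> sy" using W(3)[of a] by (simp add: c_def sy_def)
  define z where "z = A *v y"
  have zz: "LS * (norm z)^2 \<le> LS^2 * E"
  proof -
    have "LS * (norm z)^2 = LS * (z \<bullet> (A *v y))" by (simp add: z_def power2_norm_eq_inner)
    also have "\<dots> = (\<Sum>s\<in>UNIV. \<Sum>s'\<in>UNIV. w s s' * (LS * ((\<phi> s \<bullet> z) * (a s - \<gamma> * a s'))))"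
      using Aq[of z] by (simp add: a_def sum_distrib_left algebra_simps)
    also have "\<dots> \<le> (\<Sum>s\<in>UNIV. \<Sum>s'\<in>UNIV. w s s' * (((\<phi> s \<bullet> z)^2 + LS^2 * (a s - \<gamma> * a s')^2) / 2))"
    proof (intro sum_mono mult_left_mono wnn)
      fix s s'
      have "0 \<le> ((\<phi> s \<bullet> z) - LS * (a s - \<gamma> * a s'))^2" by simp
      then show "LS * ((\<phi> s \<bullet> z) * (a s - \<gamma> * a s')) \<le> ((\<phi> s \<bullet> z)^2 + LS^2 * (a s - \<gamma> * a s')^2) / 2"
        by (simp add: power2_eq_square algebra_simps)
    qed
    also have "\<dots> = ((\<Sum>s\<in>UNIV. \<Sum>s'\<in>UNIV. w s s' * (\<phi> s \<bullet> z)^2) + LS^2 * E) / 2"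
      by (simp add: E_def sum_divide_distrib[symmetric] sum.distrib[symmetric] sum_distrib_left algebra_simps)
    finally have c1: "LS * (norm z)^2 \<le> ((\<Sum>s\<in>UNIV. \<Sum>s'\<in>UNIV. w s s' * (\<phi> s \<bullet> z)^2) + LS^2 * E) / 2" .
    have "(\<Sum>s\<in>UNIV. \<Sum>s'\<in>UNIV. w s s' * (\<phi> s \<bullet> z)^2) = z \<bullet> (Sig *v z)"
      using W(1)[of "\<lambda>s. \<phi> s \<bullet> z"] Sq[of z] by simp
    also have "\<dots> \<le> LS * (norm z)^2" by (rule up)
    finally have c2: "(\<Sum>s\<in>UNIV. \<Sum>s'\<in>UNIV. w s s' * (\<phi> s \<bullet> z)^2) \<le> LS * (norm z)^2" .
    from c1 c2 show ?thesis by argo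
  qed
  then have zE: "(norm z)^2 \<le> LS * E" using LS by (simp add: power2_eq_square)
  have expand: "(norm (y - \<eta> *\<^sub>R z))^2 = (norm y)^2 - 2 * \<eta> * (y \<bullet> z) + \<eta>^2 * (norm z)^2"
    unfolding power2_norm_eq_inner by (simp add: inner_diff_left inner_diff_right inner_commute power2_eq_square algebra_simps)
  have "\<eta>^2 * (norm z)^2 \<le> \<eta>^2 * (LS * E)" using zE eta by (intro mult_left_mono) auto
  also have "\<dots> = \<eta> * (\<eta> * LS) * E" by (simp add: power2_eq_square)
  also have "\<dots> \<le> \<eta> * (1/2) * E" using eta Enn by (intro mult_right_mono mult_left_mono) auto
  finally have t2: "\<eta>^2 * (norm z)^2 \<le> \<eta> / 2 * E" by simp
  have "(norm (y - \<eta> *\<^sub>R z))^2 \<le> (norm y)^2 - \<eta> * (2 * (sy - \<gamma> * c) - E / 2)"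
    using expand t2 yAy by (simp add: z_def algebra_simps)
  also have "2 * (sy - \<gamma> * c) - E / 2 = (3 - \<gamma>^2) / 2 * sy - \<gamma> * c" unfolding E by (simp add: field_simps)
  also have "(norm y)^2 - \<eta> * ((3 - \<gamma>^2) / 2 * sy - \<gamma> * c) \<le> (norm y)^2 - \<eta> * (3/2 * (1 - \<gamma>) * sy)"
  proof -
    have gc: "\<gamma> * c \<le> \<gamma> * sy" using csy gamma by (intro mult_left_mono) auto
    have syn: "sy \<ge> 0" unfolding sy_def using mu_nonneg by (intro sum_nonneg) auto
    have k: "(3 - \<gamma>^2) / 2 * sy - \<gamma> * sy = 3/2 * (1 - \<gamma>) * sy + \<gamma> * (1 - \<gamma>) / 2 * sy"
      by (simp add: power2_eq_square field_simps)
    have "\<gamma> * (1 - \<gamma>) / 2 * sy \<ge> 0" using gamma syn by simp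
    then have "3/2 * (1 - \<gamma>) * sy \<le> (3 - \<gamma>^2) / 2 * sy - \<gamma> * c" using gc k by linarith
    then have "\<eta> * (3/2 * (1 - \<gamma>) * sy) \<le> \<eta> * ((3 - \<gamma>^2) / 2 * sy - \<gamma> * c)" using eta(1) by (rule mult_left_mono)
    then show ?thesis by linarith
  qed
  also have "\<dots> \<le> (norm y)^2 - \<eta> * (3/2 * (1 - \<gamma>) * (Lmn * (norm y)^2))"
  proof -
    have "Lmn * (norm y)^2 \<le> sy" using lo[of y] sy by simp
    then have "3/2 * (1 - \<gamma>) * (Lmn * (norm y)^2) \<le> 3/2 * (1 - \<gamma>) * sy" using gamma by (intro mult_left_mono) auto
    then have "\<eta> * (3/2 * (1 - \<gamma>) * (Lmn * (norm y)^2)) \<le> \<eta> * (3/2 * (1 - \<gamma>) * sy)" using eta(1) by (rule mult_left_mono)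
    then show ?thesis by linarith
  qed
  also have "\<dots> = (1 - 3/2 * \<eta> * (1-\<gamma>) * Lmn) * (norm y)^2" by (simp add: algebra_simps)
  finally show ?thesis by (simp add: z_def)
qed


lemma step_prod_same: "step_prod \<eta> A j j = mat 1"
  by (simp add: step_prod_def)

lemma step_prod_cons: "Suc t \<le> j \<Longrightarrow> step_prod \<eta> A t j = (mat 1 - \<eta> (Suc t) *\<^sub>R A) ** step_prod \<eta> A (Suc t) j"
  unfolding step_prod_def by (subst upt_conv_Cons) auto

lemma B_mv: "(mat 1 - c *\<^sub>R A) *v y = y - c *\<^sub>R ((A::real^'n^'n) *v y)"
  by (simp add: matrix_vector_mult_diff_rdistrib smat_mv)

lemma tele_step:
  assumes "1 \<le> t" "t \<le> j"
  shows "\<eta> t *\<^sub>R (A *v (step_prod \<eta> A t j *v x)) = step_prod \<eta> A t j *v x - step_prod \<eta> A (t - 1) j *v (x::real^'n)"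
proof -
  have "step_prod \<eta> A (t - 1) j = (mat 1 - \<eta> t *\<^sub>R A) ** step_prod \<eta> A t j"
    using step_prod_cons[of "t - 1" j \<eta> A] assms by simp
  then show ?thesis by (simp add: matrix_vector_mul_assoc[symmetric] B_mv)
qed

lemma telescope_vec: fixes j :: nat shows "(\<Sum>t\<in>{1..j}. f t - f (t - 1)) = f j - (f 0 :: 'a::ab_group_add)"
  by (induction j) (auto simp: sum.atLeast_Suc_atMost_Suc_shift)

lemma tele_sum: "(\<Sum>t\<in>{1..j}. \<eta> t *\<^sub>R (A *v (step_prod \<eta> A t j *v x))) = x - step_prod \<eta> A 0 j *v (x::real^'n)"
proof -
  have "(\<Sum>t\<in>{1..j}. \<eta> t *\<^sub>R (A *v (step_prod \<eta> A t j *v x))) = (\<Sum>t\<in>{1..j}. step_prod \<eta> A t j *v x - step_prod \<eta> A (t - 1) j *v x)"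
    by (intro sum.cong refl tele_step) auto
  also have "\<dots> = step_prod \<eta> A j j *v x - step_prod \<eta> A 0 j *v x"
    by (rule telescope_vec)
  finally show ?thesis by (simp add: step_prod_same)
qed

lemma swap_tri: fixes T :: nat shows "(\<Sum>t\<in>{1..T}. \<Sum>j\<in>{t..T}. g t j) = (\<Sum>j\<in>{1..T}. \<Sum>t\<in>{1..j}. (g t j :: 'a::comm_monoid_add))"
proof (induction T)
  case 0 then show ?case by simp
next
  case (Suc T)
  have "(\<Sum>t\<in>{1..Suc T}. \<Sum>j\<in>{t..Suc T}. g t j) = (\<Sum>t\<in>{1..Suc T}. (\<Sum>j\<in>{t..T}. g t j) + g t (Suc T))"
    by (intro sum.cong refl) (auto simp: atLeastAtMostSuc_conv add.commute)
  also have "\<dots> = (\<Sum>t\<in>{1..Suc T}. \<Sum>j\<in>{t..T}. g t j) + (\<Sum>t\<in>{1..Suc T}. g t (Suc T))"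
    by (simp add: sum.distrib)
  also have "(\<Sum>t\<in>{1..Suc T}. \<Sum>j\<in>{t..T}. g t j) = (\<Sum>t\<in>{1..T}. \<Sum>j\<in>{t..T}. g t j)"
    by simp
  finally show ?case using Suc by simp
qed

lemma mv_sum: "(M::real^'n^'m) *v (\<Sum>j\<in>S. v j) = (\<Sum>j\<in>S. M *v v j)"
  by (induction S rule: infinite_finite_induct) (auto simp: matrix_vector_right_distrib)

lemma Q_sum:
  "(\<Sum>t\<in>{1..T}. A *v (Qmat \<eta> A T t *v x)) = (\<Sum>j\<in>{1..T}. x - step_prod \<eta> A 0 j *v (x::real^'n))"
proof -
  have "(\<Sum>t\<in>{1..T}. A *v (Qmat \<eta> A T t *v x)) = (\<Sum>t\<in>{1..T}. \<Sum>j\<in>{t..T}. \<eta> t *\<^sub>R (A *v (step_prod \<eta> A t j *v x)))"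
    by (simp add: Qmat_def smat_mv sum_mv mv_scaleR mv_sum scaleR_sum_right)
  also have "\<dots> = (\<Sum>j\<in>{1..T}. \<Sum>t\<in>{1..j}. \<eta> t *\<^sub>R (A *v (step_prod \<eta> A t j *v x)))"
    by (rule swap_tri)
  also have "\<dots> = (\<Sum>j\<in>{1..T}. x - step_prod \<eta> A 0 j *v x)"
    by (rule sum.cong[OF refl tele_sum])
  finally show ?thesis .
qed

lemma foldr_bound:
  assumes "\<And>k y. k \<in> set xs \<Longrightarrow> norm ((mat 1 - \<eta> k *\<^sub>R A) *v y) \<le> exp (- (c * \<eta> k)) * norm (y::real^'n)"
  shows "norm (foldr (\<lambda>k M. (mat 1 - \<eta> k *\<^sub>R A) ** M) xs (mat 1) *v x) \<le> exp (- (\<Sum>k\<leftarrow>xs. c * \<eta> k)) * norm x"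
  using assms
proof (induction xs)
  case Nil then show ?case by simp
next
  case (Cons k xs)
  let ?F = "foldr (\<lambda>k M. (mat 1 - \<eta> k *\<^sub>R A) ** M) xs (mat 1)"
  have "norm (foldr (\<lambda>k M. (mat 1 - \<eta> k *\<^sub>R A) ** M) (k # xs) (mat 1) *v x) = norm ((mat 1 - \<eta> k *\<^sub>R A) *v (?F *v x))"
    by (simp add: matrix_vector_mul_assoc)
  also have "\<dots> \<le> exp (- (c * \<eta> k)) * norm (?F *v x)" using Cons.prems by simp
  also have "\<dots> \<le> exp (- (c * \<eta> k)) * (exp (- (\<Sum>k\<leftarrow>xs. c * \<eta> k)) * norm x)"
    using Cons by (intro mult_left_mono) auto
  also have "\<dots> = exp (- (\<Sum>k\<leftarrow>k # xs. c * \<eta> k)) * norm x"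
    by (simp add: exp_add[symmetric] algebra_simps exp_diff)
  finally show ?case .
qed

lemma step_prod_bound:
  assumes "\<And>k y. 1 \<le> k \<Longrightarrow> norm ((mat 1 - \<eta> k *\<^sub>R A) *v y) \<le> exp (- (c * \<eta> k)) * norm (y::real^'n)"
  shows "norm (step_prod \<eta> A 0 j *v x) \<le> exp (- (\<Sum>k\<in>{1..j}. c * \<eta> k)) * norm x"
proof -
  have "norm (step_prod \<eta> A 0 j *v x) \<le> exp (- (\<Sum>k\<leftarrow>[Suc 0..<Suc j]. c * \<eta> k)) * norm x"
    unfolding step_prod_def by (rule foldr_bound) (use assms in auto)
  moreover have "(\<Sum>k\<leftarrow>[Suc 0..<Suc j]. c * \<eta> k) = (\<Sum>k\<in>{1..j}. c * \<eta> k)"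
    by (simp only: sum_set_upt_conv_sum_list_nat[symmetric] set_upt atLeastLessThanSuc_atLeastAtMost One_nat_def)
  ultimately show ?thesis by simp
qed


lemma tr_inner: "x \<bullet> ((A::real^'n^'m) *v z) = (transpose A *v x) \<bullet> z"
  by (metis dot_lmul_matrix transpose_matrix_vector)

lemma eta_bounds:
  assumes "0 < \<eta>0" "0 < \<alpha>" "1 \<le> k"
  shows "0 \<le> \<eta>0 * real k powr (-\<alpha>)" "\<eta>0 * real k powr (-\<alpha>) \<le> \<eta>0"
proof -
  have "1 \<le> real k powr \<alpha>" using assms by (intro ge_one_powr_ge_zero) auto
  then have "real k powr (-\<alpha>) \<le> 1" by (simp add: powr_minus inverse_le_1_iff)
  then show "\<eta>0 * real k powr (-\<alpha>) \<le> \<eta>0" using assms by (simp add: mult_left_le)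
  show "0 \<le> \<eta>0 * real k powr (-\<alpha>)" using assms by simp
qed

lemma main_core:
  fixes \<gamma> :: real
    and P :: "'s::finite \<Rightarrow> 's \<Rightarrow> real"
    and \<mu> :: "'s \<Rightarrow> real"
    and \<phi> :: "'s \<Rightarrow> real^'d::finite"
    and \<alpha> \<eta>0 :: real and T :: nat and G :: "real^'d^'d"
  defines "Sig \<equiv> (\<Sum>s\<in>UNIV. \<mu> s *\<^sub>R outer (\<phi> s) (\<phi> s))"
    and "A \<equiv> (\<Sum>s\<in>UNIV. \<Sum>s'\<in>UNIV. (\<mu> s * P s s') *\<^sub>R outer (\<phi> s) (\<phi> s - \<gamma> *\<^sub>R \<phi> s'))"
    and "\<eta> \<equiv> (\<lambda>t::nat. \<eta>0 * real t powr (- \<alpha>))"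
  assumes gamma: "0 \<le> \<gamma>" "\<gamma> < 1"
    and P_nonneg: "\<And>s s'. 0 \<le> P s s'"
    and P_sum: "\<And>s. (\<Sum>s'\<in>UNIV. P s s') = 1"
    and mu_nonneg: "\<And>s. 0 \<le> \<mu> s"
    and mu_stat: "\<And>s'. (\<Sum>s\<in>UNIV. \<mu> s * P s s') = \<mu> s'"
    and lam0_pos: "lambda_min Sig > 0"
    and alpha: "1/2 < \<alpha>" "\<alpha> < 1"
    and eta0: "0 < \<eta>0" "\<eta>0 \<le> 1 / (2 * lambda_max Sig)"
    and Gsym: "transpose G = G" and Gpd: "pos_def G"
    and T_large: "real T \<ge> 4 * (2 / ((1 - \<gamma>) * lambda_min Sig * \<eta>0)) powr (1 / (1 - \<alpha>))
        * (1 - \<alpha>) powr (\<alpha> / (1 - \<alpha>)) * Gamma (1 / (1 - \<alpha>)) * cond_num G"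
  shows "lambda_min (A ** Lambda_bar \<eta> A G T ** transpose A) \<ge> lambda_min G / 2
            \<and> lambda_min G / 2 = 1 / (2 * mat_norm (matrix_inv G))"
proof -
  have symS: "transpose Sig = Sig"
    by (simp add: Sig_def transpose_sum transpose_scalar transpose_outer)
  define L0 where "L0 = lambda_min Sig"
  define LS where "LS = lambda_max Sig"
  have lo: "L0 * (norm y)^2 \<le> y \<bullet> (Sig *v y)" for y using sym_lmin(2)[OF symS] by (simp add: L0_def)
  have up: "y \<bullet> (Sig *v y) \<le> LS * (norm y)^2" for y using sym_lmax[OF symS] by (simp add: LS_def)
  have L0pos: "L0 > 0" using lam0_pos by (simp add: L0_def)
  have L0LS: "L0 \<le> LS"
  proof -
    obtain v :: "real^'d" where "norm v = 1" using sym_lmin(1)[OF symS] by blast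
    then show ?thesis using lo[of v] up[of v] by simp
  qed
  have LS: "LS > 0" using L0pos L0LS by simp
  have eLS: "\<eta>0 * LS \<le> 1/2" using eta0 LS by (simp add: LS_def field_simps)
  define c where "c = 3/4 * (1 - \<gamma>) * L0"
  define b where "b = c * \<eta>0"
  have b: "0 < b" "b \<le> 3/8"
  proof -
    show "0 < b" using gamma L0pos eta0 by (simp add: b_def c_def)
    have "b \<le> 3/4 * (L0 * \<eta>0)" using gamma L0pos eta0 unfolding b_def c_def
      by (simp add: mult_le_cancel_right1 mult.assoc mult_left_le_one_le)
    also have "L0 * \<eta>0 \<le> LS * \<eta>0" using L0LS eta0 by (intro mult_right_mono) auto
    finally show "b \<le> 3/8" using eLS by (simp add: mult.commute)
  qed
  have al0: "0 < \<alpha>" using alpha by simp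
  have Bk: "norm ((mat 1 - \<eta> k *\<^sub>R A) *v y) \<le> exp (- (c * \<eta> k)) * norm y" if k: "1 \<le> k" for k y
  proof -
    have ek: "0 \<le> \<eta> k" "\<eta> k \<le> \<eta>0" using eta_bounds[OF eta0(1) al0 k] by (auto simp: \<eta>_def)
    have ekLS: "\<eta> k * LS \<le> 1/2" using ek eLS LS by (smt (verit) mult_right_mono)
    have sq: "(norm (y - \<eta> k *\<^sub>R (A *v y)))^2 \<le> (1 - 3/2 * \<eta> k * (1-\<gamma>) * L0) * (norm y)^2"
      using contraction[where \<phi>=\<phi> and Lmn=L0 and LS=LS and \<eta>="\<eta> k" and y=y and \<gamma>=\<gamma> and P=P and \<mu>=\<mu>]
        gamma P_nonneg P_sum mu_nonneg mu_stat LS up lo ek(1) ekLS unfolding Sig_def A_def by blast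
    define u where "u = c * \<eta> k"
    have u: "0 \<le> u" "u \<le> 3/8"
    proof -
      show "0 \<le> u" using ek gamma L0pos by (simp add: u_def c_def)
      have "u \<le> b" unfolding u_def b_def using ek gamma L0pos by (intro mult_left_mono) (auto simp: c_def)
      then show "u \<le> 3/8" using b by simp
    qed
    have "1 - 3/2 * \<eta> k * (1-\<gamma>) * L0 = 1 - 2 * u" by (simp add: u_def c_def)
    also have "\<dots> \<le> (1 - u)^2" by (simp add: power2_eq_square algebra_simps)
    also have "\<dots> \<le> (exp (- u))^2"
    proof -
      have "1 - u \<le> exp (- u)" using exp_ge_add_one_self[of "- u"] by simp
      then show ?thesis using u by (intro power_mono) auto
    qed
    finally have "(norm (y - \<eta> k *\<^sub>R (A *v y)))^2 \<le> (exp (- u) * norm y)^2"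
      using sq by (smt (verit) mult_right_mono power_mult_distrib zero_le_power2)
    then have "norm (y - \<eta> k *\<^sub>R (A *v y)) \<le> exp (- u) * norm y"
      by (rule power2_le_imp_le) simp
    then show ?thesis by (simp add: B_mv u_def)
  qed
  have Pi: "norm (step_prod \<eta> A 0 j *v x) \<le> exp (- (b * (\<Sum>k\<in>{1..j}. real k powr (-\<alpha>)))) * norm x" for j x
  proof -
    have "(\<Sum>k\<in>{1..j}. c * \<eta> k) = b * (\<Sum>k\<in>{1..j}. real k powr (-\<alpha>))"
      by (simp add: \<eta>_def b_def sum_distrib_left mult.assoc)
    then show ?thesis using step_prod_bound[of \<eta> A c j x, OF Bk] by simp
  qed
  define S where "S = (\<Sum>j\<in>{1..T}. exp (- (b * (\<Sum>k\<in>{1..j}. real k powr (-\<alpha>)))))"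
  have Gfacts: "lambda_min G > 0" "lambda_min G = 1 / mat_norm (matrix_inv G)" "cond_num G \<ge> 1"
    using pd_facts[OF Gsym Gpd] by auto
  define X where "X = 4 * (3/2/b) powr (1/(1-\<alpha>)) * (1-\<alpha>) powr (\<alpha>/(1-\<alpha>)) * Gamma (1/(1-\<alpha>))"
  have Xpos: "X > 0" using alpha b by (simp add: X_def)
  have gen: "\<And>K::real. K \<noteq> 0 \<Longrightarrow> 3/2/(3/4*K) = 2/K" by (simp add: field_simps)
  have bK: "b = 3/4 * ((1 - \<gamma>) * lambda_min Sig * \<eta>0)" by (simp add: b_def c_def L0_def)
  have "(1 - \<gamma>) * lambda_min Sig * \<eta>0 \<noteq> 0" using gamma L0pos eta0 by (simp add: L0_def)
  then have "3/2/b = 2 / ((1 - \<gamma>) * lambda_min Sig * \<eta>0)" unfolding bK by (rule gen)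
  then have XT: "X * cond_num G \<le> real T" using T_large by (simp add: X_def)
  have "X \<le> X * cond_num G" using Xpos Gfacts(3) by simp
  then have XT': "X \<le> real T" using XT by linarith
  have S: "S \<le> real T / 4" unfolding S_def by (rule num_main[OF al0 alpha(2) b]) (use XT' in \<open>simp add: X_def\<close>)
  have Tpos: "real T > 0" using Xpos XT' by linarith
  define Lb where "Lb = Lambda_bar \<eta> A G T"
  define M where "M = A ** Lb ** transpose A"
  define Q where "Q t = Qmat \<eta> A T t" for t
  define g where "g = lambda_min G"
  have gpos: "g > 0" using Gfacts by (simp add: g_def)
  have symLb: "transpose Lb = Lb"
    by (simp add: Lb_def Lambda_bar_def transpose_scalar transpose_sum matrix_transpose_mul Gsym matrix_mul_assoc)
  have symM: "transpose M = M"
    by (simp add: M_def matrix_transpose_mul symLb matrix_mul_assoc)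
  define u where "u t x = transpose (Q t) *v (transpose A *v x)" for t x
  have form: "x \<bullet> (M *v x) = (1 / real T) * (\<Sum>t\<in>{1..T}. u t x \<bullet> (G *v u t x))" for x
  proof -
    have "x \<bullet> (M *v x) = (transpose A *v x) \<bullet> (Lb *v (transpose A *v x))"
      by (simp add: M_def matrix_vector_mul_assoc[symmetric] tr_inner)
    also have "Lb *v (transpose A *v x) = (1 / real T) *\<^sub>R (\<Sum>t\<in>{1..T}. Q t *v (G *v u t x))"
      by (simp add: Lb_def Lambda_bar_def smat_mv sum_mv matrix_vector_mul_assoc[symmetric] u_def Q_def)
    also have "(transpose A *v x) \<bullet> ((1 / real T) *\<^sub>R (\<Sum>t\<in>{1..T}. Q t *v (G *v u t x))) = (1 / real T) * (\<Sum>t\<in>{1..T}. u t x \<bullet> (G *v u t x))"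
      by (simp add: inner_sum_right tr_inner u_def)
    finally show ?thesis .
  qed
  have ux: "(\<Sum>t\<in>{1..T}. u t x \<bullet> x) \<ge> 3/4 * real T * (norm x)^2" for x
  proof -
    have "(\<Sum>t\<in>{1..T}. u t x \<bullet> x) = (\<Sum>t\<in>{1..T}. x \<bullet> (A *v (Q t *v x)))"
    proof (intro sum.cong refl)
      fix t
      have e1: "(transpose A *v x) \<bullet> (Q t *v x) = (transpose (Q t) *v (transpose A *v x)) \<bullet> x" by (rule tr_inner)
      have e2: "x \<bullet> (A *v (Q t *v x)) = (transpose A *v x) \<bullet> (Q t *v x)" by (rule tr_inner)
      show "u t x \<bullet> x = x \<bullet> (A *v (Q t *v x))" by (simp only: u_def e1[symmetric] e2)
    qed
    also have "\<dots> = x \<bullet> (\<Sum>t\<in>{1..T}. A *v (Qmat \<eta> A T t *v x))" by (simp add: inner_sum_right Q_def)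
    also have "\<dots> = x \<bullet> (\<Sum>j\<in>{1..T}. x - step_prod \<eta> A 0 j *v x)" by (simp only: Q_sum)
    also have "\<dots> = (\<Sum>j\<in>{1..T}. (norm x)^2 - x \<bullet> (step_prod \<eta> A 0 j *v x))"
      by (simp add: inner_sum_right inner_diff_right power2_norm_eq_inner)
    also have "\<dots> \<ge> (\<Sum>j\<in>{1..T}. (norm x)^2 - exp (- (b * (\<Sum>k\<in>{1..j}. real k powr (-\<alpha>)))) * (norm x)^2)"
    proof (intro sum_mono)
      fix j
      have "x \<bullet> (step_prod \<eta> A 0 j *v x) \<le> norm x * norm (step_prod \<eta> A 0 j *v x)" by (rule norm_cauchy_schwarz)
      also have "\<dots> \<le> norm x * (exp (- (b * (\<Sum>k\<in>{1..j}. real k powr (-\<alpha>)))) * norm x)"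
        by (intro mult_left_mono Pi) auto
      finally show "(norm x)^2 - exp (- (b * (\<Sum>k\<in>{1..j}. real k powr (-\<alpha>)))) * (norm x)^2 \<le> (norm x)^2 - x \<bullet> (step_prod \<eta> A 0 j *v x)"
        by (simp add: power2_eq_square algebra_simps)
    qed
    also have "(\<Sum>j\<in>{1..T}. (norm x)^2 - exp (- (b * (\<Sum>k\<in>{1..j}. real k powr (-\<alpha>)))) * (norm x)^2) = real T * (norm x)^2 - S * (norm x)^2"
      by (simp add: S_def sum_subtractf sum_distrib_right)
    finally have "real T * (norm x)^2 - S * (norm x)^2 \<le> (\<Sum>t\<in>{1..T}. u t x \<bullet> x)" .
    moreover have "S * (norm x)^2 \<le> real T / 4 * (norm x)^2" using S by (intro mult_right_mono) auto
    ultimately show ?thesis by simp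
  qed
  have key: "g / 2 * (norm x)^2 \<le> x \<bullet> (M *v x)" for x
  proof (cases "x = 0")
    case True then show ?thesis by simp
  next
    case False
    define W where "W = 3/4 * (norm x)^2"
    have nx: "(norm x)^2 > 0" using False by simp
    have each: "2 * W * (u t x \<bullet> x) - W^2 \<le> (norm (u t x))^2 * (norm x)^2" for t
    proof -
      have "(u t x \<bullet> x)^2 \<le> (norm (u t x) * norm x)^2"
        using Cauchy_Schwarz_ineq2[of "u t x" x] by (metis abs_ge_zero power2_abs power_mono)
      moreover have "2 * W * (u t x \<bullet> x) - W^2 \<le> (u t x \<bullet> x)^2"
        using sum_squares_bound[of W "u t x \<bullet> x"] by (simp add: power2_eq_square algebra_simps)
      ultimately show ?thesis by (simp add: power_mult_distrib)
    qed
    define U where "U = (\<Sum>t\<in>{1..T}. u t x \<bullet> x)"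
    define V where "V = (\<Sum>t\<in>{1..T}. (norm (u t x))^2) * (norm x)^2"
    have h1: "(\<Sum>t\<in>{1..T}. 2 * W * (u t x \<bullet> x) - W^2) \<le> V"
      unfolding V_def sum_distrib_right by (intro sum_mono each)
    have h2: "(\<Sum>t\<in>{1..T}. 2 * W * (u t x \<bullet> x) - W^2) = 2 * W * U - real T * W^2"
      by (simp add: sum_subtractf sum_distrib_left U_def)
    have h3: "2 * W * (real T * W) \<le> 2 * W * U"
      using ux[of x] nx unfolding U_def by (intro mult_left_mono) (auto simp: W_def)
    have h4: "2 * W * (real T * W) - real T * W^2 = real T * W^2" by (simp add: power2_eq_square)
    have "real T * W^2 \<le> V" using h1 h2 h3 h4 by linarith
    then have "real T * W^2 \<le> (\<Sum>t\<in>{1..T}. (norm (u t x))^2) * (norm x)^2" by (simp add: V_def)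
    then have "real T * (9/16) * (norm x)^2 * (norm x)^2 \<le> (\<Sum>t\<in>{1..T}. (norm (u t x))^2) * (norm x)^2"
      by (simp add: W_def power2_eq_square algebra_simps)
    then have su: "real T * (9/16) * (norm x)^2 \<le> (\<Sum>t\<in>{1..T}. (norm (u t x))^2)"
      using nx by (simp only: mult_le_cancel_right_pos)
    have "(\<Sum>t\<in>{1..T}. g * (norm (u t x))^2) \<le> (\<Sum>t\<in>{1..T}. u t x \<bullet> (G *v u t x))"
      by (intro sum_mono) (simp add: g_def sym_lmin(2)[OF Gsym])
    then have "g * (real T * (9/16) * (norm x)^2) \<le> (\<Sum>t\<in>{1..T}. u t x \<bullet> (G *v u t x))"
    proof -
      have "(\<Sum>t\<in>{1..T}. g * (norm (u t x))^2) = g * (\<Sum>t\<in>{1..T}. (norm (u t x))^2)" by (simp add: sum_distrib_left)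
      moreover have "g * (real T * (9/16) * (norm x)^2) \<le> g * (\<Sum>t\<in>{1..T}. (norm (u t x))^2)"
        using su gpos by (intro mult_left_mono) auto
      ultimately show ?thesis using \<open>(\<Sum>t\<in>{1..T}. g * (norm (u t x))^2) \<le> (\<Sum>t\<in>{1..T}. u t x \<bullet> (G *v u t x))\<close> by linarith
    qed
    then have "(1 / real T) * (g * (real T * (9/16) * (norm x)^2)) \<le> x \<bullet> (M *v x)"
      unfolding form using Tpos by (intro mult_left_mono) auto
    then have "g * (9/16) * (norm x)^2 \<le> x \<bullet> (M *v x)" using Tpos by simp
    moreover have "g / 2 * (norm x)^2 \<le> g * (9/16) * (norm x)^2" using gpos by (intro mult_right_mono) auto
    ultimately show ?thesis by linarith
  qed
  have "g / 2 \<le> lambda_min M" by (rule sym_lmin_ge[OF symM key])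
  then show ?thesis using Gfacts by (simp add: M_def Lb_def g_def)
qed
lemma bl_transpose: "bounded_linear (transpose :: real^'n^'m \<Rightarrow> real^'m^'n)"
proof -
  have "linear (transpose :: real^'n^'m \<Rightarrow> real^'m^'n)"
    by (rule linearI) (simp_all add: transpose_add transpose_scalar)
  then show ?thesis by (simp add: linear_conv_bounded_linear)
qed

lemma G_sym:
  fixes D :: "'a pmf" and f :: "'a \<Rightarrow> real^'d^'d"
  assumes "\<And>p. transpose (f p) = f p"
  shows "transpose (measure_pmf.expectation D f) = measure_pmf.expectation D f"
proof -
  have "measure_pmf.expectation D (\<lambda>p. transpose (f p)) = transpose (measure_pmf.expectation D f)"
    by (rule integral_bounded_linear'[OF bl_transpose bl_transpose]) simp
  moreover have "(\<lambda>p. transpose (f p)) = f" using assms by (rule ext)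
  ultimately show ?thesis by simp
qed

theorem mainTheorem17:
  fixes \<gamma> :: real
    and P :: "'s::finite \<Rightarrow> 's \<Rightarrow> real"
    and \<mu> :: "'s \<Rightarrow> real"
    and r :: "'s \<Rightarrow> real"
    and \<phi> :: "'s \<Rightarrow> real^'d::finite"
    and D :: "('s \<times> 's \<times> real) pmf"
    and \<alpha> \<eta>0 :: real
    and T :: nat
  assumes gamma: "0 \<le> \<gamma>" "\<gamma> < 1"
    and P_nonneg: "\<And>s s'. 0 \<le> P s s'"
    and P_sum: "\<And>s. (\<Sum>s'\<in>UNIV. P s s') = 1"
    and mu_nonneg: "\<And>s. 0 \<le> \<mu> s"
    and mu_sum: "(\<Sum>s\<in>UNIV. \<mu> s) = 1"
    and mu_stat: "\<And>s'. (\<Sum>s\<in>UNIV. \<mu> s * P s s') = \<mu> s'"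
    and r_range: "\<And>s. 0 \<le> r s \<and> r s \<le> 1"
    and phi_bd: "\<And>s. norm (\<phi> s) \<le> 1"
    and D_marg: "\<And>s s'. measure_pmf.prob D {(x, y, z). x = s \<and> y = s'} = \<mu> s * P s s'"
    and D_rew: "\<And>x y z. (x, y, z) \<in> set_pmf D \<Longrightarrow> 0 \<le> z \<and> z \<le> 1"
    and D_condexp: "\<And>s. measure_pmf.expectation D (\<lambda>(x, y, z). if x = s then z else 0) = \<mu> s * r s"
    and lam0_pos: "lambda_min (\<Sum>s\<in>UNIV. \<mu> s *\<^sub>R outer (\<phi> s) (\<phi> s)) > 0"
    and alpha: "1/2 < \<alpha>" "\<alpha> < 1"
    and eta0: "0 < \<eta>0" "\<eta>0 \<le> 1 / (2 * lambda_max (\<Sum>s\<in>UNIV. \<mu> s *\<^sub>R outer (\<phi> s) (\<phi> s)))"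
    and Gamma_pd: "pos_def
      (let A = (\<Sum>s\<in>UNIV. \<Sum>s'\<in>UNIV. (\<mu> s * P s s') *\<^sub>R outer (\<phi> s) (\<phi> s - \<gamma> *\<^sub>R \<phi> s'));
           b = (\<Sum>s\<in>UNIV. (\<mu> s * r s) *\<^sub>R \<phi> s);
           \<theta> = matrix_inv A *v b
       in measure_pmf.expectation D (\<lambda>(x, y, z).
            let e = outer (\<phi> x) (\<phi> x - \<gamma> *\<^sub>R \<phi> y) *v \<theta> - z *\<^sub>R \<phi> x in outer e e))"
    and T_large: "real T \<ge> 4 * (2 / ((1 - \<gamma>) *
          lambda_min (\<Sum>s\<in>UNIV. \<mu> s *\<^sub>R outer (\<phi> s) (\<phi> s)) * \<eta>0)) powr (1 / (1 - \<alpha>))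
        * (1 - \<alpha>) powr (\<alpha> / (1 - \<alpha>)) * Gamma (1 / (1 - \<alpha>))
        * cond_num
      (let A = (\<Sum>s\<in>UNIV. \<Sum>s'\<in>UNIV. (\<mu> s * P s s') *\<^sub>R outer (\<phi> s) (\<phi> s - \<gamma> *\<^sub>R \<phi> s'));
           b = (\<Sum>s\<in>UNIV. (\<mu> s * r s) *\<^sub>R \<phi> s);
           \<theta> = matrix_inv A *v b
       in measure_pmf.expectation D (\<lambda>(x, y, z).
            let e = outer (\<phi> x) (\<phi> x - \<gamma> *\<^sub>R \<phi> y) *v \<theta> - z *\<^sub>R \<phi> x in outer e e))"
  shows "let A = (\<Sum>s\<in>UNIV. \<Sum>s'\<in>UNIV. (\<mu> s * P s s') *\<^sub>R outer (\<phi> s) (\<phi> s - \<gamma> *\<^sub>R \<phi> s'));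
             b = (\<Sum>s\<in>UNIV. (\<mu> s * r s) *\<^sub>R \<phi> s);
             \<theta> = matrix_inv A *v b;
             G = measure_pmf.expectation D (\<lambda>(x, y, z).
                   let e = outer (\<phi> x) (\<phi> x - \<gamma> *\<^sub>R \<phi> y) *v \<theta> - z *\<^sub>R \<phi> x in outer e e);
             \<eta> = (\<lambda>t::nat. \<eta>0 * real t powr (- \<alpha>))
         in lambda_min (A ** Lambda_bar \<eta> A G T ** transpose A) \<ge> lambda_min G / 2
            \<and> lambda_min G / 2 = 1 / (2 * mat_norm (matrix_inv G))"
proof -
  note GP = Gamma_pd[unfolded Let_def] and TL = T_large[unfolded Let_def]
  show ?thesis unfolding Let_def
    apply (rule main_core[OF gamma P_nonneg P_sum mu_nonneg mu_stat lam0_pos alpha eta0 _ GP TL])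
    apply (rule G_sym)
    apply (auto simp: transpose_outer split: prod.splits)
    done
qed

end
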